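(* Let $E_0 \subset \mathbb{Z}$ satisfy $\limsup_{n\to\infty} |E_0 \cap [1,n]|/n > 0$. Then the set \[ D = \{ xy - z^2 : x,y,z \in E_0 - E_0\} \subset \mathbb{Z}, \] where $E_0 - E_0 = \{a-b : a,b\in E_0\}$, contains a non-trivial subgroup of $\mathbb{Z}$. *)

theory Defs
  imports "HOL-Analysis.Analysis"
begin

definition upper_density :: "int set \<Rightarrow> ereal" where
  "upper_density E = limsup (\<lambda>n::nat. ereal (real (card (E \<inter> {1..int n})) / real n))"

definition diffset :: "int set \<Rightarrow> int set" where
  "diffset E = {a - b | a b. a \<in> E \<and> b \<in> E}"

definition int_subgroup :: "int set \<Rightarrow> bool" where
  "int_subgroup H \<longleftrightarrow> 0 \<in> H \<and> (\<forall>a\<in>H. \<forall>b\<in>H. a - b \<in> H)"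

end

theory Submission
  imports Defs
begin

lemma density_freq:
  fixes E :: "int set"
  assumes "upper_density E > 0"
  shows "\<exists>\<delta>>0. \<forall>N0. \<exists>N\<ge>N0. N > 0 \<and> real (card (E \<inter> {1..int N})) \<ge> \<delta> * real N"
proof -
  define f where "f = (\<lambda>n::nat. ereal (real (card (E \<inter> {1..int n})) / real n))"
  have lp: "limsup f > 0" using assms unfolding upper_density_def f_def by simp
  obtain \<delta> where d: "0 < ereal \<delta>" "ereal \<delta> < limsup f" using ereal_dense2[OF lp] by blast
  have fr: "\<forall>N0. \<exists>N\<ge>N0. f N > ereal \<delta>"
  proof (rule ccontr)
    assume "\<not> ?thesis"
    then obtain N0 where "\<forall>N\<ge>N0. f N \<le> ereal \<delta>" by (auto simp: not_less)
    then have "\<forall>y>ereal \<delta>. eventually (\<lambda>x. y > f x) sequentially"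
      by (auto simp: eventually_sequentially intro!: exI[of _ N0] intro: le_less_trans)
    then have "limsup f \<le> ereal \<delta>" using Limsup_le_iff by blast
    with d show False by simp
  qed
  show ?thesis
  proof (intro exI[of _ \<delta>] conjI allI)
    show "\<delta> > 0" using d by simp
    fix N0
    obtain N where N: "N \<ge> N0" "f N > ereal \<delta>" using fr by blast
    have Npos: "N > 0" using N d unfolding f_def by (cases "N = 0") auto
    have "\<delta> < real (card (E \<inter> {1..int N})) / real N" using N unfolding f_def by simp
    then have "\<delta> * real N \<le> real (card (E \<inter> {1..int N}))" using Npos
      by (simp add: pos_less_divide_eq less_imp_le)
    then show "\<exists>N\<ge>N0. N > 0 \<and> real (card (E \<inter> {1..int N})) \<ge> \<delta> * real N" using N Npos by blast
  qed
qed

lemma recur: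
  fixes E :: "int set" and \<delta> :: real and d :: nat
  assumes dpos: "\<delta> > 0"
    and freq: "\<forall>N0. \<exists>N\<ge>N0. N > 0 \<and> real (card (E \<inter> {1..int N})) \<ge> \<delta> * real N"
  shows "\<exists>M::nat. \<forall>c::nat\<Rightarrow>int. \<exists>s\<in>{1..int M}. \<forall>j<d. s * c j \<in> diffset E"
proof -
  obtain M :: nat where M0: "(2/\<delta>)^d < real M" using reals_Archimedean2 by blast
  then have M: "(2/\<delta>)^d < real M + 1" by simp
  show ?thesis
  proof (intro exI[of _ M] allI)
    fix c :: "nat \<Rightarrow> int"
    show "\<exists>s\<in>{1..int M}. \<forall>j<d. s * c j \<in> diffset E"
    proof (rule ccontr)
      assume H: "\<not> ?thesis"
      define C :: int where "C = int M * (\<Sum>j<d. \<bar>c j\<bar>)"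
      have C0: "C \<ge> 0" unfolding C_def by (simp add: sum_nonneg)
      obtain N where N: "N \<ge> nat (2*C)" "N > 0" "real (card (E \<inter> {1..int N})) \<ge> \<delta> * real N"
        using freq by blast
      define A where "A = E \<inter> {1..int N}"
      define P where "P = PiE {..<d} (\<lambda>_. A)"
      define B where "B = PiE {..<d} (\<lambda>_. {1 - C .. int N + C})"
      define \<phi> where "\<phi> = (\<lambda>(a::nat) (e::nat\<Rightarrow>int). restrict (\<lambda>j. e j + int a * c j) {..<d})"
      have cjC: "int a * \<bar>c j\<bar> \<le> C" if "a \<le> M" "j < d" for a j
      proof -
        have "\<bar>c j\<bar> \<le> (\<Sum>j<d. \<bar>c j\<bar>)"
          using that by (intro member_le_sum) auto
        then show ?thesis unfolding C_def using that
          by (intro mult_mono) auto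
      qed
      have sub: "\<phi> a ` P \<subseteq> B" if "a \<le> M" for a
      proof
        fix x assume "x \<in> \<phi> a ` P"
        then obtain e where e: "e \<in> P" "x = \<phi> a e" by blast
        show "x \<in> B" unfolding B_def e(2) \<phi>_def
        proof (rule restrict_PiE_iff[THEN iffD2], intro ballI)
          fix j assume j: "j \<in> {..<d}"
          have ej: "e j \<in> A" using e(1) j unfolding P_def by auto
          have "\<bar>int a * c j\<bar> \<le> C" using cjC[OF that, of j] j by (simp add: abs_mult)
          then show "e j + int a * c j \<in> {1 - C..int N + C}" using ej unfolding A_def by auto
        qed
      qed
      have inj: "inj_on (\<phi> a) P" for a
      proof
        fix e e' assume e: "e \<in> P" "e' \<in> P" "\<phi> a e = \<phi> a e'"
        show "e = e'"
        proof (rule PiE_ext[OF e(1)[unfolded P_def] e(2)[unfolded P_def]])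
          fix j assume j: "j \<in> {..<d}"
          have "\<phi> a e j = \<phi> a e' j" using e(3) by simp
          then show "e j = e' j" using j unfolding \<phi>_def by simp
        qed
      qed
      have disj: "\<phi> a ` P \<inter> \<phi> b ` P = {}" if ab: "a \<in> {..M}" "b \<in> {..M}" "a \<noteq> b" for a b
      proof -
        have key: False if lt: "a' < b'" "b' \<le> M" "e \<in> P" "e' \<in> P" "\<phi> a' e = \<phi> b' e'" for a' b' e e'
        proof -
          have "\<forall>j<d. (int b' - int a') * c j \<in> diffset E"
          proof (intro allI impI)
            fix j assume j: "j < d"
            have "\<phi> a' e j = \<phi> b' e' j" using lt(5) by simp
            then have eq: "e j + int a' * c j = e' j + int b' * c j" using j unfolding \<phi>_def by simp
            have "e j \<in> E" "e' j \<in> E" using lt(3,4) j unfolding P_def A_def by auto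
            moreover have "(int b' - int a') * c j = e j - e' j" using eq by (simp add: algebra_simps)
            ultimately show "(int b' - int a') * c j \<in> diffset E" unfolding diffset_def by blast
          qed
          moreover have "int b' - int a' \<in> {1..int M}" using lt by auto
          ultimately show False using H by blast
        qed
        show ?thesis
        proof (rule ccontr)
          assume "\<phi> a ` P \<inter> \<phi> b ` P \<noteq> {}"
          then obtain e e' where ee: "e \<in> P" "e' \<in> P" "\<phi> a e = \<phi> b e'" by blast
          show False
          proof (cases "a < b")
            case True then show False using key[OF True _ ee] ab by auto
          next
            case False then have "b < a" using ab by auto
            then show False using key[OF \<open>b < a\<close> _ ee(2,1)] ee(3) ab by auto
          qed
        qed
      qed
      have finP: "finite P" unfolding P_def A_def by (intro finite_PiE) auto
      have finB: "finite B" unfolding B_def by (intro finite_PiE) auto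
      have cardP: "card P = card A ^ d" unfolding P_def by (simp add: card_PiE)
      have cardB: "card B = nat (int N + 2*C) ^ d" unfolding B_def by (simp add: card_PiE add.commute)
      have "card (\<Union>a\<in>{..M}. \<phi> a ` P) = (\<Sum>a\<in>{..M}. card (\<phi> a ` P))"
        using finP disj by (intro card_UN_disjoint) auto
      also have "\<dots> = (M + 1) * card A ^ d"
        using inj by (simp add: card_image cardP)
      finally have c1: "card (\<Union>a\<in>{..M}. \<phi> a ` P) = (M + 1) * card A ^ d" .
      have "card (\<Union>a\<in>{..M}. \<phi> a ` P) \<le> card B"
        using sub finB by (intro card_mono) auto
      then have ineq: "(M + 1) * card A ^ d \<le> nat (int N + 2*C) ^ d" using c1 cardB by simp
      have NC: "real (nat (int N + 2*C)) \<le> 2 * real N" using N(1) C0 by linarith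
      have "real (M+1) * (\<delta> * real N)^d \<le> real (M+1) * real (card A)^d"
        using N(3) dpos unfolding A_def by (intro mult_left_mono power_mono) auto
      also have "\<dots> \<le> real (nat (int N + 2*C)) ^ d"
        using ineq by (metis of_nat_le_iff of_nat_mult of_nat_power)
      also have "\<dots> \<le> (2 * real N) ^ d" using NC by (intro power_mono) auto
      finally have "real (M+1) * \<delta>^d * real N ^ d \<le> 2^d * real N ^ d"
        by (simp add: power_mult_distrib mult.assoc)
      then have "real (M+1) * \<delta>^d \<le> 2^d" using N(2) by simp
      then have "real (M+1) \<le> 2^d / \<delta>^d" using dpos by (simp add: pos_le_divide_eq)
      then show False using M by (simp add: power_divide)
    qed
  qed
qed

theorem corollary1p4:
  fixes E0 :: "int set"
  assumes "upper_density E0 > 0"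
  shows "\<exists>H. int_subgroup H \<and> H \<noteq> {0} \<and>
           H \<subseteq> {x * y - z ^ 2 | x y z. x \<in> diffset E0 \<and> y \<in> diffset E0 \<and> z \<in> diffset E0}"
proof -
  obtain \<delta> where dp: "\<delta> > 0"
    and freq: "\<forall>N0. \<exists>N\<ge>N0. N > 0 \<and> real (card (E0 \<inter> {1..int N})) \<ge> \<delta> * real N"
    using density_freq[OF assms] by blast
  have ne: "E0 \<noteq> {}"
  proof
    assume "E0 = {}"
    then show False using freq dp by (metis Int_empty_left card.empty linorder_not_le mult_pos_pos of_nat_0 of_nat_0_less_iff order_refl)
  qed
  then obtain e where "e \<in> E0" by blast
  then have z0: "0 \<in> diffset E0" unfolding diffset_def by force
  obtain R :: nat where R: "\<forall>c::nat\<Rightarrow>int. \<exists>s\<in>{1..int R}. \<forall>j<1. s * c j \<in> diffset E0"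
    using recur[OF dp freq, of 1] by blast
  define L :: int where "L = int (fact R)"
  obtain M :: nat where M: "\<forall>c::nat\<Rightarrow>int. \<exists>s\<in>{1..int M}. \<forall>j<R. s * c j \<in> diffset E0"
    using recur[OF dp freq, of R] by blast
  then obtain s where s: "s \<in> {1..int M}" "\<forall>j<R. s * (L div int (j+1)) \<in> diffset E0"
    using M[rule_format, of "\<lambda>j. L div int (j+1)"] by blast
  define K where "K = s * L"
  have Kne: "K \<noteq> 0" using s(1) unfolding K_def L_def by auto
  define H where "H = {K * t | t. True}"
  show ?thesis
  proof (intro exI[of _ H] conjI)
    show "int_subgroup H" unfolding int_subgroup_def H_def
      by (auto simp: right_diff_distrib[symmetric] intro: exI[of _ 0])
    show "H \<noteq> {0}" unfolding H_def using Kne by (auto dest!: equalityD1 elim!: subsetCE[where c = K]) 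
    show "H \<subseteq> {x * y - z ^ 2 | x y z. x \<in> diffset E0 \<and> y \<in> diffset E0 \<and> z \<in> diffset E0}"
    proof
      fix n assume "n \<in> H"
      then obtain t where t: "n = K * t" unfolding H_def by blast
      obtain i where i: "i \<in> {1..int R}" "i * t \<in> diffset E0"
        using R[rule_format, of "\<lambda>_. t"] by auto
      define j where "j = nat i - 1"
      have jR: "j < R" using i(1) unfolding j_def by auto
      have ij: "int (j+1) = i" using i(1) unfolding j_def by auto
      have y: "s * (L div i) \<in> diffset E0" using s(2) jR ij by metis
      have idvd: "i dvd L" unfolding L_def
      proof -
        have "nat i dvd fact R" using i(1) by (intro dvd_fact) auto
        then have "int (nat i) dvd int (fact R)" by (simp only: int_dvd_int_iff)
        then show "i dvd int (fact R)" using i(1) by simp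
      qed
      have "(i * t) * (s * (L div i)) - 0 ^ 2 = n"
        using idvd unfolding t K_def by (auto simp: algebra_simps dvd_def)
      then show "n \<in> {x * y - z ^ 2 | x y z. x \<in> diffset E0 \<and> y \<in> diffset E0 \<and> z \<in> diffset E0}"
        using i(2) y z0 by blast
    qed
  qed
qed

end
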